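(* Let $d\ge4$ and $1\le p<d/2$ be integers. If $\mathbf{a}=(a,(a_{j00},a_{j01},a_{j10},a_{j11})_{j\in[p]})$ is a point on the boundary of $K$ with $a\notin\{0,\tfrac12\}$, then $\mathbf{a}$ is not a local maximum of $\varphi$ on $K$.
   Context: Let $\tau_j=\binom{d}{p}\binom{p}{j}\binom{d-p}{p-j}$ for $0\le j\le p$. Points of $\mathbb{R}^{4p+1}$ are written $\mathbf{z}=(z,(z_{j00},z_{j01},z_{j10},z_{j11})_{j\in[p]})$, with $z_{0\alpha\alpha}=z-\sum_{j\in[p]}z_{j\alpha\alpha}$ ($\alpha\in\{0,1\}$) and $z_{0\alpha\beta}=\frac12-z-\sum_{j\in[p]}z_{j\alpha\beta}$ ($\alpha\ne\beta$). $K$ is the set of $\mathbf{z}$ with $0\le z\le\frac12$ and $z_{j\alpha\beta}\ge0$ for all $0\le j\le p$, $\alpha,\beta\in\{0,1\}$. $A(\mathbf{z})=p+(d-4p)z+\sum_{j\in[p]}j(z_{j00}+z_{j11}-z_{j01}-z_{j10})$, $B=\frac d2-A$, and $\varphi(\mathbf{z})=A\log A+B\log B+\sum_{0\le j\le p,\ \alpha,\beta\in\{0,1\}}(z_{j\alpha\beta}\log\tau_j-z_{j\alpha\beta}\log z_{j\alpha\beta})$, with $0\log0=0$, a continuous function on $K$. *)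

theory Defs
  imports "HOL-Analysis.Analysis"
begin

text \<open>A point of R^(4p+1) is a pair (z, w) where z is the first coordinate and
  w j a b stands for z_{j a b}, for j in {1..p} and a, b in {0,1}.
  All other values of w are required to be 0 (so the carrier is a copy of R^(4p+1)).\<close>

type_synonym pt = "real \<times> (nat \<Rightarrow> nat \<Rightarrow> nat \<Rightarrow> real)"

definition Pspace :: "nat \<Rightarrow> pt set" where
  "Pspace p = {(z, w). \<forall>j a b. (j \<notin> {1..p} \<or> a > 1 \<or> b > 1) \<longrightarrow> w j a b = 0}"

definition pdist :: "nat \<Rightarrow> pt \<Rightarrow> pt \<Rightarrow> real" where
  "pdist p x y = sqrt ((fst x - fst y)\<^sup>2 +
     (\<Sum>j\<in>{1..p}. \<Sum>a<2. \<Sum>b<2. (snd x j a b - snd y j a b)\<^sup>2))"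

definition tau :: "nat \<Rightarrow> nat \<Rightarrow> nat \<Rightarrow> real" where
  "tau d p j = real ((d choose p) * (p choose j) * ((d - p) choose (p - j)))"

text \<open>Extended coordinates: index 0 is the dependent coordinate z_{0ab}.\<close>
definition zc :: "nat \<Rightarrow> pt \<Rightarrow> nat \<Rightarrow> nat \<Rightarrow> nat \<Rightarrow> real" where
  "zc p x j a b = (if j = 0 then
       (if a = b then fst x - (\<Sum>i\<in>{1..p}. snd x i a a)
        else 1/2 - fst x - (\<Sum>i\<in>{1..p}. snd x i a b))
     else snd x j a b)"

definition Kset :: "nat \<Rightarrow> pt set" where
  "Kset p = {x \<in> Pspace p. 0 \<le> fst x \<and> fst x \<le> 1/2 \<and>
       (\<forall>j\<in>{0..p}. \<forall>a<2. \<forall>b<2. 0 \<le> zc p x j a b)}"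

definition Afun :: "nat \<Rightarrow> nat \<Rightarrow> pt \<Rightarrow> real" where
  "Afun d p x = real p + (real d - 4 * real p) * fst x +
     (\<Sum>j\<in>{1..p}. real j * (snd x j 0 0 + snd x j 1 1 - snd x j 0 1 - snd x j 1 0))"

definition Bfun :: "nat \<Rightarrow> nat \<Rightarrow> pt \<Rightarrow> real" where
  "Bfun d p x = real d / 2 - Afun d p x"

definition xlogx :: "real \<Rightarrow> real" where
  "xlogx t = (if t = 0 then 0 else t * ln t)"

definition phi :: "nat \<Rightarrow> nat \<Rightarrow> pt \<Rightarrow> real" where
  "phi d p x = xlogx (Afun d p x) + xlogx (Bfun d p x) +
     (\<Sum>j\<in>{0..p}. \<Sum>a<2. \<Sum>b<2. zc p x j a b * ln (tau d p j) - xlogx (zc p x j a b))"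

text \<open>Topological boundary of K inside R^(4p+1) (K is closed, so boundary points lie in K).\<close>
definition on_boundary :: "nat \<Rightarrow> pt \<Rightarrow> bool" where
  "on_boundary p x \<longleftrightarrow> x \<in> Kset p \<and>
     (\<forall>e>0. \<exists>y\<in>Pspace p. pdist p y x < e \<and> y \<notin> Kset p)"

definition is_local_max_on_K :: "nat \<Rightarrow> nat \<Rightarrow> pt \<Rightarrow> bool" where
  "is_local_max_on_K d p x \<longleftrightarrow> x \<in> Kset p \<and>
     (\<exists>e>0. \<forall>y\<in>Kset p. pdist p y x < e \<longrightarrow> phi d p y \<le> phi d p x)"

end

theory Submission
  imports Defs
begin

lemma xlogx_convex:
  assumes "0 < u" "0 \<le> v"
  shows "xlogx u + (ln u + 1) * (v - u) \<le> xlogx v"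
proof (cases "v = 0")
  case True
  then show ?thesis using assms by (simp add: xlogx_def algebra_simps)
next
  case False
  then have v: "0 < v" using assms by simp
  have "ln (u / v) \<le> u / v - 1" using assms v by (intro ln_le_minus_one) simp
  then have "v * ln (u / v) \<le> v * (u / v - 1)" using v by (intro mult_left_mono) auto
  then have "v * (ln u - ln v) \<le> u - v" using assms v by (simp add: ln_div algebra_simps)
  then show ?thesis using assms v False by (simp add: xlogx_def algebra_simps)
qed

lemma pdist_fst: "\<bar>fst y - fst x\<bar> \<le> pdist p y x"
proof -
  have "0 \<le> (\<Sum>j\<in>{1..p}. \<Sum>a<2. \<Sum>b<2. (snd y j a b - snd x j a b)\<^sup>2)"
    by (intro sum_nonneg) auto
  then have "\<bar>fst y - fst x\<bar>\<^sup>2 \<le> (fst y - fst x)\<^sup>2 +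
     (\<Sum>j\<in>{1..p}. \<Sum>a<2. \<Sum>b<2. (snd y j a b - snd x j a b)\<^sup>2)" by simp
  then show ?thesis unfolding pdist_def by (rule real_le_rsqrt)
qed

lemma pdist_snd:
  assumes "i \<in> {1..p}" "a < 2" "b < 2"
  shows "\<bar>snd y i a b - snd x i a b\<bar> \<le> pdist p y x"
proof -
  let ?T = "\<lambda>j a b. (snd y j a b - snd x j a b)\<^sup>2"
  have "?T i a b \<le> (\<Sum>b'<2. ?T i a b')"
    using assms by (intro member_le_sum) auto
  also have "\<dots> \<le> (\<Sum>a'<2. \<Sum>b'<2. ?T i a' b')"
    using assms by (intro member_le_sum sum_nonneg) auto
  also have "\<dots> \<le> (\<Sum>j\<in>{1..p}. \<Sum>a'<2. \<Sum>b'<2. ?T j a' b')"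
    using assms by (intro member_le_sum sum_nonneg) auto
  also have "\<dots> \<le> (fst y - fst x)\<^sup>2 + (\<Sum>j\<in>{1..p}. \<Sum>a'<2. \<Sum>b'<2. ?T j a' b')"
    by simp
  finally have "\<bar>snd y i a b - snd x i a b\<bar>\<^sup>2 \<le> (fst y - fst x)\<^sup>2 + (\<Sum>j\<in>{1..p}. \<Sum>a'<2. \<Sum>b'<2. ?T j a' b')"
    by simp
  then show ?thesis unfolding pdist_def by (rule real_le_rsqrt)
qed

lemma pdist_nonneg: "0 \<le> pdist p y x"
  unfolding pdist_def by (intro real_sqrt_ge_zero add_nonneg_nonneg sum_nonneg) auto

lemma pdist_zc:
  assumes "j \<le> p" "a < 2" "b < 2"
  shows "\<bar>zc p y j a b - zc p x j a b\<bar> \<le> (real p + 1) * pdist p y x"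
proof (cases "j = 0")
  case False
  then have j: "j \<in> {1..p}" using assms by auto
  have "zc p y j a b - zc p x j a b = snd y j a b - snd x j a b"
    using False by (simp add: zc_def)
  also have "\<bar>\<dots>\<bar> \<le> pdist p y x"
    using pdist_snd[OF j assms(2,3)] .
  finally have "\<bar>zc p y j a b - zc p x j a b\<bar> \<le> pdist p y x" .
  moreover have "pdist p y x \<le> (real p + 1) * pdist p y x"
    using pdist_nonneg[of p y x] by (simp add: algebra_simps)
  ultimately show ?thesis by linarith
next
  case True
  have s: "\<bar>(\<Sum>i\<in>{1..p}. snd y i a b) - (\<Sum>i\<in>{1..p}. snd x i a b)\<bar> \<le> real p * pdist p y x"
  proof -
    have "\<bar>(\<Sum>i\<in>{1..p}. snd y i a b) - (\<Sum>i\<in>{1..p}. snd x i a b)\<bar>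
        = \<bar>\<Sum>i\<in>{1..p}. snd y i a b - snd x i a b\<bar>" by (simp only: sum_subtractf)
    also have "\<dots> \<le> (\<Sum>i\<in>{1..p}. \<bar>snd y i a b - snd x i a b\<bar>)" by (rule sum_abs)
    also have "\<dots> \<le> (\<Sum>i\<in>{1..p}. pdist p y x)"
    proof (rule sum_mono)
      fix i assume "i \<in> {1..p}"
      then show "\<bar>snd y i a b - snd x i a b\<bar> \<le> pdist p y x" using pdist_snd assms(2,3) by blast
    qed
    also have "\<dots> = real p * pdist p y x" by simp
    finally show ?thesis .
  qed
  have f: "\<bar>fst y - fst x\<bar> \<le> pdist p y x" by (rule pdist_fst)
  show ?thesis
  proof (cases "a = b")
    case True
    then have "zc p y j a b - zc p x j a b = (fst y - fst x) - ((\<Sum>i\<in>{1..p}. snd y i a b) - (\<Sum>i\<in>{1..p}. snd x i a b))"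
      using \<open>j = 0\<close> by (simp add: zc_def)
    then show ?thesis using s f by (simp add: algebra_simps abs_le_iff)
  next
    case False
    then have "zc p y j a b - zc p x j a b = - (fst y - fst x) - ((\<Sum>i\<in>{1..p}. snd y i a b) - (\<Sum>i\<in>{1..p}. snd x i a b))"
      using \<open>j = 0\<close> by (simp add: zc_def)
    then show ?thesis using s f by (simp add: algebra_simps abs_le_iff)
  qed
qed

lemma boundary_zero:
  assumes b: "on_boundary p x" and z0: "0 < fst x" and z1: "fst x < 1/2"
  shows "\<exists>j\<in>{0..p}. \<exists>a<2. \<exists>b<2. zc p x j a b = 0"
proof (rule ccontr)
  assume nz: "\<not> ?thesis"
  have xK: "x \<in> Kset p" using b by (simp add: on_boundary_def)
  have pos: "0 < zc p x j a b" if "j \<in> {0..p}" "a < 2" "b < 2" for j a b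
  proof -
    have "zc p x j a b \<noteq> 0" using nz that by blast
    moreover have "0 \<le> zc p x j a b" using xK that unfolding Kset_def by blast
    ultimately show ?thesis by simp
  qed
  define S where "S = {0..p} \<times> {..<(2::nat)} \<times> {..<(2::nat)}"
  define f where "f = (\<lambda>(j, a, b). zc p x j a b)"
  define m where "m = Min (f ` S)"
  have finS: "finite (f ` S)" unfolding S_def by simp
  have "(0, 0, 0) \<in> S" unfolding S_def by simp
  then have neS: "f ` S \<noteq> {}" by blast
  have "m \<in> f ` S" unfolding m_def using finS neS by (rule Min_in)
  then obtain j a b where "(j, a, b) \<in> S" "m = f (j, a, b)" by auto
  then have mpos: "0 < m" unfolding f_def S_def using pos by simp
  have mle: "m \<le> zc p x j a b" if "j \<in> {0..p}" "a < 2" "b < 2" for j a b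
  proof -
    have "f (j, a, b) \<in> f ` S" unfolding S_def using that by auto
    then show ?thesis unfolding m_def using finS by (auto simp: f_def)
  qed
  define r where "r = min m (min (fst x) (1/2 - fst x)) / (real p + 2)"
  have rpos: "0 < r" unfolding r_def using mpos z0 z1 by auto
  obtain y where yP: "y \<in> Pspace p" and yd: "pdist p y x < r" and yK: "y \<notin> Kset p"
    using b rpos unfolding on_boundary_def by blast
  have r1: "r \<le> fst x / 2" and r2: "r \<le> (1/2 - fst x) / 2"
    and r3: "(real p + 1) * r < m"
  proof -
    have mm: "min m (min (fst x) (1/2 - fst x)) > 0" using mpos z0 z1 by auto
    have "r \<le> min m (min (fst x) (1/2 - fst x)) / 2" unfolding r_def
      using mm by (intro divide_left_mono) auto
    then show "r \<le> fst x / 2" "r \<le> (1/2 - fst x) / 2" by auto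
    have "(real p + 1) * r = min m (min (fst x) (1/2 - fst x)) * ((real p + 1) / (real p + 2))"
      unfolding r_def by simp
    also have "\<dots> < min m (min (fst x) (1/2 - fst x)) * 1"
      using mm by (intro mult_strict_left_mono) auto
    also have "\<dots> \<le> m" by simp
    finally show "(real p + 1) * r < m" .
  qed
  have "\<bar>fst y - fst x\<bar> \<le> pdist p y x" by (rule pdist_fst)
  then have fy: "0 \<le> fst y \<and> fst y \<le> 1/2" using yd r1 r2 z0 z1 by auto
  have "0 \<le> zc p y j a b" if "j \<in> {0..p}" "a < 2" "b < 2" for j a b
  proof -
    have "\<bar>zc p y j a b - zc p x j a b\<bar> \<le> (real p + 1) * pdist p y x"
      using that by (intro pdist_zc) auto
    also have "\<dots> \<le> (real p + 1) * r" using yd by (intro mult_left_mono) auto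
    finally show ?thesis using r3 mle[OF that] by linarith
  qed
  then have "y \<in> Kset p" using yP fy unfolding Kset_def by blast
  then show False using yK by simp
qed

lemma K_facts:
  assumes xK: "x \<in> Kset p"
  shows "\<And>i a b. i \<in> {1..p} \<Longrightarrow> a < 2 \<Longrightarrow> b < 2 \<Longrightarrow> 0 \<le> snd x i a b"
    and "(\<Sum>i\<in>{1..p}. snd x i 0 0) \<le> fst x"
    and "(\<Sum>i\<in>{1..p}. snd x i 1 1) \<le> fst x"
    and "(\<Sum>i\<in>{1..p}. snd x i 0 1) \<le> 1/2 - fst x"
    and "(\<Sum>i\<in>{1..p}. snd x i 1 0) \<le> 1/2 - fst x"
proof -
  have K: "\<And>j a b. j \<in> {0..p} \<Longrightarrow> a < 2 \<Longrightarrow> b < 2 \<Longrightarrow> 0 \<le> zc p x j a b"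
    using xK unfolding Kset_def by blast
  show "\<And>i a b. i \<in> {1..p} \<Longrightarrow> a < 2 \<Longrightarrow> b < 2 \<Longrightarrow> 0 \<le> snd x i a b"
  proof -
    fix i a b assume "i \<in> {1..p}" "a < (2::nat)" "b < (2::nat)"
    then show "0 \<le> snd x i a b" using K[of i a b] by (simp add: zc_def)
  qed
  show "(\<Sum>i\<in>{1..p}. snd x i 0 0) \<le> fst x" using K[of 0 0 0] by (simp add: zc_def)
  show "(\<Sum>i\<in>{1..p}. snd x i 1 1) \<le> fst x" using K[of 0 1 1] by (simp add: zc_def)
  show "(\<Sum>i\<in>{1..p}. snd x i 0 1) \<le> 1/2 - fst x" using K[of 0 0 1] by (simp add: zc_def)
  show "(\<Sum>i\<in>{1..p}. snd x i 1 0) \<le> 1/2 - fst x" using K[of 0 1 0] by (simp add: zc_def)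
qed

lemma AB_pos:
  assumes xK: "x \<in> Kset p" and z0: "0 < fst x" and z1: "fst x < 1/2" and dp: "2 * p < d"
  shows "0 < Afun d p x" "0 < Bfun d p x"
proof -
  note F = K_facts[OF xK]
  define T where "T = (\<Sum>j\<in>{1..p}. real j * (snd x j 0 0 + snd x j 1 1 - snd x j 0 1 - snd x j 1 0))"
  have "T \<ge> (\<Sum>j\<in>{1..p}. - (real p * (snd x j 0 1 + snd x j 1 0)))"
    unfolding T_def
  proof (rule sum_mono)
    fix j assume j: "j \<in> {1..p}"
    have n: "0 \<le> snd x j 0 0" "0 \<le> snd x j 1 1" "0 \<le> snd x j 0 1" "0 \<le> snd x j 1 0"
      using F(1)[OF j] by auto
    have "real j * (snd x j 0 1 + snd x j 1 0) \<le> real p * (snd x j 0 1 + snd x j 1 0)"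
      using j n by (intro mult_right_mono) auto
    moreover have "0 \<le> real j * (snd x j 0 0 + snd x j 1 1)" using n by simp
    ultimately show "- (real p * (snd x j 0 1 + snd x j 1 0)) \<le> real j * (snd x j 0 0 + snd x j 1 1 - snd x j 0 1 - snd x j 1 0)"
      by (simp add: algebra_simps)
  qed
  also have "(\<Sum>j\<in>{1..p}. - (real p * (snd x j 0 1 + snd x j 1 0))) = - (real p * ((\<Sum>j\<in>{1..p}. snd x j 0 1) + (\<Sum>j\<in>{1..p}. snd x j 1 0)))"
    by (simp only: sum_negf sum.distrib[symmetric] sum_distrib_left)
  finally have T1: "T \<ge> - (real p * ((\<Sum>j\<in>{1..p}. snd x j 0 1) + (\<Sum>j\<in>{1..p}. snd x j 1 0)))" .
  have "T \<le> (\<Sum>j\<in>{1..p}. real p * (snd x j 0 0 + snd x j 1 1))"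
    unfolding T_def
  proof (rule sum_mono)
    fix j assume j: "j \<in> {1..p}"
    have n: "0 \<le> snd x j 0 0" "0 \<le> snd x j 1 1" "0 \<le> snd x j 0 1" "0 \<le> snd x j 1 0"
      using F(1)[OF j] by auto
    have "real j * (snd x j 0 0 + snd x j 1 1) \<le> real p * (snd x j 0 0 + snd x j 1 1)"
      using j n by (intro mult_right_mono) auto
    moreover have "0 \<le> real j * (snd x j 0 1 + snd x j 1 0)" using n by simp
    ultimately show "real j * (snd x j 0 0 + snd x j 1 1 - snd x j 0 1 - snd x j 1 0) \<le> real p * (snd x j 0 0 + snd x j 1 1)"
      by (simp add: algebra_simps)
  qed
  also have "(\<Sum>j\<in>{1..p}. real p * (snd x j 0 0 + snd x j 1 1)) = real p * ((\<Sum>j\<in>{1..p}. snd x j 0 0) + (\<Sum>j\<in>{1..p}. snd x j 1 1))"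
    by (simp only: sum.distrib[symmetric] sum_distrib_left)
  finally have T2: "T \<le> real p * ((\<Sum>j\<in>{1..p}. snd x j 0 0) + (\<Sum>j\<in>{1..p}. snd x j 1 1))" .
  have p0: "0 \<le> real p" by simp
  have T1': "T \<ge> - (real p * (1 - 2 * fst x))"
    using T1 F(4,5) mult_left_mono[OF _ p0, of "(\<Sum>j\<in>{1..p}. snd x j 0 1) + (\<Sum>j\<in>{1..p}. snd x j 1 0)" "1 - 2 * fst x"]
    by linarith
  have T2': "T \<le> real p * (2 * fst x)"
    using T2 F(2,3) mult_left_mono[OF _ p0, of "(\<Sum>j\<in>{1..p}. snd x j 0 0) + (\<Sum>j\<in>{1..p}. snd x j 1 1)" "2 * fst x"]
    by linarith
  have dp': "0 < real d - 2 * real p" using dp by linarith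
  have P1: "0 < (real d - 2 * real p) * fst x" using dp' z0 by simp
  have P2: "0 < (real d - 2 * real p) * (1/2 - fst x)" using dp' z1 by simp
  have A: "Afun d p x = real p + (real d - 4 * real p) * fst x + T"
    unfolding Afun_def T_def by simp
  show "0 < Afun d p x" using A T1' P1 by (simp add: algebra_simps)
  show "0 < Bfun d p x" using A T2' P2 unfolding Bfun_def by (simp add: algebra_simps)
qed

definition ind :: "nat \<Rightarrow> nat \<Rightarrow> real" where
  "ind j i = (if i = j then (if j = 0 then 0 else 1) else 0)"

definition del :: "nat \<Rightarrow> nat \<Rightarrow> real" where
  "del j i = (if i = j then 1 else 0)"

definition mv :: "nat \<Rightarrow> nat \<Rightarrow> nat \<Rightarrow> nat \<Rightarrow> real \<Rightarrow> pt \<Rightarrow> pt" where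
  "mv j k al be t x = (fst x, \<lambda>i a b. snd x i a b +
      (if a = al \<and> b = be then t * (ind j i - ind k i) else 0))"

lemma sum_ind: "j \<le> p \<Longrightarrow> (\<Sum>i\<in>{1..p}. ind j i) = (if j = 0 then 0 else 1)"
  unfolding ind_def by (simp add: sum.delta')

lemma sum_ind_w: "j \<le> p \<Longrightarrow> (\<Sum>i\<in>{1..p}. real i * ind j i) = real j"
proof -
  assume j: "j \<le> p"
  have "(\<Sum>i\<in>{1..p}. real i * ind j i) = (\<Sum>i\<in>{1..p}. if i = j then (if j = 0 then 0 else real j) else 0)"
    unfolding ind_def by (intro sum.cong) auto
  also have "\<dots> = real j" using j by (simp add: sum.delta')
  finally show ?thesis .
qed

lemma sum2_delta:
  fixes al be :: nat
  assumes "al < 2" "be < 2"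
  shows "(\<Sum>a<2. \<Sum>b<2. if a = al \<and> b = be then c a b else (0::real)) = c al be"
  using less_2_cases[OF assms(1)] less_2_cases[OF assms(2)]
  by (auto simp: numeral_2_eq_2 lessThan_Suc)

lemma mv_fst: "fst (mv j k al be t x) = fst x"
  by (simp add: mv_def)

lemma mv_P:
  assumes "x \<in> Pspace p" "j \<le> p" "k \<le> p" "al < 2" "be < 2"
  shows "mv j k al be t x \<in> Pspace p"
  using assms unfolding Pspace_def mv_def ind_def by auto

lemma mv_zc:
  assumes "j \<le> p" "k \<le> p" "i \<le> p"
  shows "zc p (mv j k al be t x) i a b = zc p x i a b +
     (if a = al \<and> b = be then t * (del j i - del k i) else 0)"
proof (cases "i = 0")
  case False
  then show ?thesis unfolding zc_def mv_def ind_def del_def by auto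
next
  case True
  have s: "(\<Sum>i'\<in>{1..p}. snd (mv j k al be t x) i' a b) = (\<Sum>i'\<in>{1..p}. snd x i' a b) +
     (if a = al \<and> b = be then t * ((if j = 0 then 0 else 1) - (if k = 0 then 0 else 1)) else 0)"
  proof (cases "a = al \<and> b = be")
    case True
    then show ?thesis using sum_ind[OF assms(1)] sum_ind[OF assms(2)]
      by (simp add: mv_def sum.distrib sum_subtractf sum_distrib_left[symmetric] right_diff_distrib)
  next
    case False
    then have c: "(a = al \<and> b = be) = False" by simp
    show ?thesis by (simp only: mv_def snd_conv c if_False add_0_right)
  qed
  show ?thesis
    using True s unfolding zc_def del_def by (auto simp: mv_fst algebra_simps)
qed

lemma mv_A:
  assumes "j \<le> p" "k \<le> p" "al < 2" "be < 2"
  shows "Afun d p (mv j k al be t x) = Afun d p x + t * (if al = be then 1 else -1) * (real j - real k)"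
proof -
  define sg :: real where "sg = (if al = be then 1 else -1)"
  let ?w = "snd (mv j k al be t x)"
  have e: "?w i 0 0 + ?w i 1 1 - ?w i 0 1 - ?w i 1 0 =
      (snd x i 0 0 + snd x i 1 1 - snd x i 0 1 - snd x i 1 0) + sg * (t * (ind j i - ind k i))" for i
    using less_2_cases[OF assms(3)] less_2_cases[OF assms(4)] unfolding sg_def
    by (auto simp: mv_def)
  have "(\<Sum>i\<in>{1..p}. real i * (?w i 0 0 + ?w i 1 1 - ?w i 0 1 - ?w i 1 0)) =
     (\<Sum>i\<in>{1..p}. real i * (snd x i 0 0 + snd x i 1 1 - snd x i 0 1 - snd x i 1 0)) +
     sg * t * ((\<Sum>i\<in>{1..p}. real i * ind j i) - (\<Sum>i\<in>{1..p}. real i * ind k i))"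
    unfolding e by (simp add: sum.distrib sum_subtractf sum_distrib_left algebra_simps)
  then show ?thesis unfolding Afun_def sg_def[symmetric] using sum_ind_w[OF assms(1)] sum_ind_w[OF assms(2)]
    by (simp add: mv_fst algebra_simps)
qed

lemma mv_pdist:
  assumes "j \<le> p" "k \<le> p" "al < 2" "be < 2" "0 \<le> t"
  shows "pdist p (mv j k al be t x) x \<le> 2 * t"
proof -
  have inner: "(\<Sum>a<2. \<Sum>b<2. (snd (mv j k al be t x) i a b - snd x i a b)\<^sup>2) = (t * (ind j i - ind k i))\<^sup>2" for i
  proof -
    have "(\<Sum>a<2. \<Sum>b<2. (snd (mv j k al be t x) i a b - snd x i a b)\<^sup>2) =
        (\<Sum>a<2. \<Sum>b<2. if a = al \<and> b = be then (t * (ind j i - ind k i))\<^sup>2 else 0)"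
      by (intro sum.cong refl) (simp add: mv_def)
    also have "\<dots> = (t * (ind j i - ind k i))\<^sup>2" by (rule sum2_delta[OF assms(3,4)])
    finally show ?thesis .
  qed
  have sq: "(t * (ind j i - ind k i))\<^sup>2 \<le> t\<^sup>2 * (ind j i + ind k i)" for i
    unfolding ind_def by (auto simp: power2_eq_square)
  have "(\<Sum>i\<in>{1..p}. \<Sum>a<2. \<Sum>b<2. (snd (mv j k al be t x) i a b - snd x i a b)\<^sup>2)
      = (\<Sum>i\<in>{1..p}. (t * (ind j i - ind k i))\<^sup>2)" unfolding inner ..
  also have "\<dots> \<le> (\<Sum>i\<in>{1..p}. t\<^sup>2 * (ind j i + ind k i))" by (intro sum_mono sq)
  also have "\<dots> = t\<^sup>2 * ((\<Sum>i\<in>{1..p}. ind j i) + (\<Sum>i\<in>{1..p}. ind k i))"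
    by (simp only: sum.distrib[symmetric] sum_distrib_left)
  also have "\<dots> \<le> t\<^sup>2 * 2"
    using sum_ind[OF assms(1)] sum_ind[OF assms(2)] by (intro mult_left_mono) auto
  also have "\<dots> \<le> (2 * t)\<^sup>2" by (simp add: power2_eq_square)
  finally have S: "(fst (mv j k al be t x) - fst x)\<^sup>2 + (\<Sum>i\<in>{1..p}. \<Sum>a<2. \<Sum>b<2. (snd (mv j k al be t x) i a b - snd x i a b)\<^sup>2) \<le> (2 * t)\<^sup>2"
    by (simp add: mv_fst)
  have "pdist p (mv j k al be t x) x \<le> sqrt ((2 * t)\<^sup>2)"
    unfolding pdist_def using S by (rule real_sqrt_le_mono)
  also have "\<dots> = 2 * t" using assms(5) by (simp only: real_sqrt_abs)
  finally show ?thesis .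
qed

lemma sum_two:
  assumes "finite S" "j \<in> S" "k \<in> S" "j \<noteq> k" "\<And>i. i \<in> S \<Longrightarrow> i \<noteq> j \<Longrightarrow> i \<noteq> k \<Longrightarrow> h i = (0::real)"
  shows "sum h S = h j + h k"
proof -
  have "sum h S = sum h {j, k}"
    using assms by (intro sum.mono_neutral_right) auto
  then show ?thesis using assms(4) by simp
qed

lemma sum3_two:
  fixes f g :: "nat \<Rightarrow> nat \<Rightarrow> nat \<Rightarrow> real" and al be :: nat
  assumes "j \<le> p" "k \<le> p" "j \<noteq> k" "al < 2" "be < 2"
    and eq: "\<And>i a b. i \<le> p \<Longrightarrow> a < 2 \<Longrightarrow> b < 2 \<Longrightarrow> \<not> (a = al \<and> b = be \<and> (i = j \<or> i = k)) \<Longrightarrow> f i a b = g i a b"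
  shows "(\<Sum>i\<in>{0..p}. \<Sum>a<2. \<Sum>b<2. f i a b) = (\<Sum>i\<in>{0..p}. \<Sum>a<2. \<Sum>b<2. g i a b)
     + (f j al be - g j al be) + (f k al be - g k al be)"
proof -
  have "(\<Sum>i\<in>{0..p}. \<Sum>a<2. \<Sum>b<2. f i a b) - (\<Sum>i\<in>{0..p}. \<Sum>a<2. \<Sum>b<2. g i a b)
      = (\<Sum>i\<in>{0..p}. \<Sum>a<2. \<Sum>b<2. f i a b - g i a b)"
    by (simp add: sum_subtractf)
  also have "\<dots> = (\<Sum>i\<in>{0..p}. \<Sum>a<2. \<Sum>b<2. if a = al \<and> b = be then f i al be - g i al be else 0)"
    by (intro sum.cong refl) (auto simp: eq)
  also have "\<dots> = (\<Sum>i\<in>{0..p}. f i al be - g i al be)"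
    by (intro sum.cong refl sum2_delta assms(4,5))
  also have "\<dots> = (f j al be - g j al be) + (f k al be - g k al be)"
    using assms by (intro sum_two) auto
  finally show ?thesis by simp
qed

lemma main_step:
  assumes xK: "x \<in> Kset p" and z0: "0 < fst x" and z1: "fst x < 1/2" and dp: "2 * p < d"
    and jp: "j \<le> p" and kp: "k \<le> p" and jk: "j \<noteq> k" and al: "al < 2" and be: "be < 2"
    and zj: "zc p x j al be = 0" and zk: "0 < zc p x k al be" and e: "0 < e"
  shows "\<exists>y\<in>Kset p. pdist p y x < e \<and> phi d p x < phi d p y"
proof -
  define Z where "Z = zc p x k al be"
  define A where "A = Afun d p x"
  define B where "B = Bfun d p x"
  define c :: real where "c = (if al = be then 1 else -1) * (real j - real k)"
  define C where "C = c * (ln A - ln B) + ln (tau d p j) - ln (tau d p k) + ln (Z / 2) + 1"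
  define t where "t = min (Z / 2) (min (e / 4) (exp C / 2))"
  define y where "y = mv j k al be t x"
  have Zp: "0 < Z" using zk Z_def by simp
  have tp: "0 < t" unfolding t_def using Zp e by simp
  have tZ: "t \<le> Z / 2" unfolding t_def by simp
  have te: "t \<le> e / 4" unfolding t_def by simp
  have tC: "t \<le> exp C / 2" unfolding t_def by simp
  have Ap: "0 < A" and Bp: "0 < B" using AB_pos[OF xK z0 z1 dp] A_def B_def by auto
  have xP: "x \<in> Pspace p" using xK by (simp add: Kset_def)
  have xK0: "0 \<le> zc p x i a b" if "i \<le> p" "a < 2" "b < 2" for i a b
    using xK that unfolding Kset_def by auto
  have zcy: "zc p y i a b = zc p x i a b + (if a = al \<and> b = be then t * (del j i - del k i) else 0)"
    if "i \<le> p" for i a b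
    unfolding y_def using mv_zc[OF jp kp that] .
  have fy: "fst y = fst x" unfolding y_def by (rule mv_fst)
  have yK: "y \<in> Kset p"
  proof -
    have "y \<in> Pspace p" unfolding y_def using mv_P[OF xP jp kp al be] .
    moreover have "0 \<le> zc p y i a b" if "i \<in> {0..p}" "a < 2" "b < 2" for i a b
      using zcy[of i a b] xK0[of i a b] that tp tZ jk Z_def zj
      by (auto simp: del_def)
    ultimately show ?thesis using xK fy unfolding Kset_def by auto
  qed
  have yd: "pdist p y x < e"
    using mv_pdist[OF jp kp al be, of t x] tp te unfolding y_def by linarith
  have Ay: "Afun d p y = A + t * c"
    unfolding y_def A_def c_def using mv_A[OF jp kp al be] by (simp add: algebra_simps)
  have By: "Bfun d p y = B - t * c"
    using Ay unfolding Bfun_def B_def A_def by simp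
  have Ayp: "0 < Afun d p y" and Byp: "0 < Bfun d p y"
    using AB_pos[OF yK _ _ dp] fy z0 z1 by auto
  have cA: "xlogx A + (ln A + 1) * (t * c) \<le> xlogx (Afun d p y)"
    using xlogx_convex[OF Ap, of "Afun d p y"] Ayp Ay by simp
  have cB: "xlogx B - (ln B + 1) * (t * c) \<le> xlogx (Bfun d p y)"
    using xlogx_convex[OF Bp, of "Bfun d p y"] Byp By by simp
  define f where "f = (\<lambda>i a b. zc p y i a b * ln (tau d p i) - xlogx (zc p y i a b))"
  define g where "g = (\<lambda>i a b. zc p x i a b * ln (tau d p i) - xlogx (zc p x i a b))"
  have split: "(\<Sum>i\<in>{0..p}. \<Sum>a<2. \<Sum>b<2. f i a b) = (\<Sum>i\<in>{0..p}. \<Sum>a<2. \<Sum>b<2. g i a b)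
     + (f j al be - g j al be) + (f k al be - g k al be)"
  proof (rule sum3_two[OF jp kp jk al be])
    fix i a b assume "i \<le> p" "a < (2::nat)" "b < (2::nat)" "\<not> (a = al \<and> b = be \<and> (i = j \<or> i = k))"
    then show "f i a b = g i a b" unfolding f_def g_def using zcy[of i a b] by (auto simp: del_def)
  qed
  have yj: "zc p y j al be = t" using zcy[OF jp, of al be] zj jk by (simp add: del_def)
  have yk: "zc p y k al be = Z - t" using zcy[OF kp, of al be] jk Z_def by (simp add: del_def)
  have fj: "f j al be - g j al be = t * ln (tau d p j) - t * ln t"
    unfolding f_def g_def using yj zj tp by (simp add: xlogx_def)
  have Zt: "0 < Z - t" using tZ Zp by simp
  have cZ: "xlogx (Z - t) + (ln (Z - t) + 1) * t \<le> xlogx Z"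
    using xlogx_convex[OF Zt, of Z] Zp by simp
  have lnZ: "ln (Z / 2) \<le> ln (Z - t)" using Zp tZ Zt by simp
  have fk: "f k al be - g k al be \<ge> - t * ln (tau d p k) + (ln (Z / 2) + 1) * t"
  proof -
    have "f k al be - g k al be = - t * ln (tau d p k) + (xlogx Z - xlogx (Z - t))"
      unfolding f_def g_def yk Z_def[symmetric] by (simp add: algebra_simps)
    moreover have "(ln (Z / 2) + 1) * t \<le> (ln (Z - t) + 1) * t"
      using lnZ tp by (intro mult_right_mono) auto
    ultimately show ?thesis using cZ by linarith
  qed
  have lnt: "ln t < C"
  proof -
    have "ln t \<le> ln (exp C / 2)" using tp tC by simp
    also have "\<dots> = C - ln 2" by (simp add: ln_div)
    also have "\<dots> < C" by simp
    finally show ?thesis .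
  qed
  have pos: "0 < t * (C - ln t)" using tp lnt by simp
  have phx: "phi d p x = xlogx A + xlogx B + (\<Sum>i\<in>{0..p}. \<Sum>a<2. \<Sum>b<2. g i a b)"
    unfolding phi_def A_def B_def g_def ..
  have phy: "phi d p y = xlogx (Afun d p y) + xlogx (Bfun d p y) + (\<Sum>i\<in>{0..p}. \<Sum>a<2. \<Sum>b<2. f i a b)"
    unfolding phi_def f_def ..
  have expand: "t * (C - ln t) = (ln A + 1) * (t * c) - (ln B + 1) * (t * c)
      + (t * ln (tau d p j) - t * ln t) + (- t * ln (tau d p k) + (ln (Z / 2) + 1) * t)"
    unfolding C_def by (simp add: algebra_simps)
  have "phi d p x < phi d p y"
    using phx phy split cA cB fj fk pos expand by linarith
  then show ?thesis using yK yd by blast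
qed

lemma group_sum:
  "(\<Sum>i\<in>{0..p}. zc p x i al be) = (if al = be then fst x else 1/2 - fst x)"
proof -
  have "(\<Sum>i\<in>{0..p}. zc p x i al be) = zc p x 0 al be + (\<Sum>i\<in>{Suc 0..p}. zc p x i al be)"
    by (rule sum.atLeast_Suc_atMost) simp
  also have "(\<Sum>i\<in>{Suc 0..p}. zc p x i al be) = (\<Sum>i\<in>{1..p}. snd x i al be)"
    by (intro sum.cong) (auto simp: zc_def)
  finally show ?thesis by (simp add: zc_def)
qed

theorem lemmaA4:
  fixes d p :: nat and x :: pt
  assumes "4 \<le> d" and "1 \<le> p" and "2 * p < d"
    and "on_boundary p x"
    and "fst x \<noteq> 0" and "fst x \<noteq> 1/2"
  shows "\<not> is_local_max_on_K d p x"
proof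
  assume lm: "is_local_max_on_K d p x"
  have xK: "x \<in> Kset p" using assms(4) by (simp add: on_boundary_def)
  have z0: "0 < fst x" and z1: "fst x < 1/2" using xK assms(5,6) unfolding Kset_def by auto
  obtain j al be where j: "j \<in> {0..p}" and al: "al < 2" and be: "be < 2" and zj: "zc p x j al be = 0"
    using boundary_zero[OF assms(4) z0 z1] by blast
  have gs: "0 < (\<Sum>i\<in>{0..p}. zc p x i al be)" using group_sum[of p x al be] z0 z1 by simp
  obtain k where k: "k \<in> {0..p}" and zk: "0 < zc p x k al be"
  proof (rule ccontr)
    assume "\<not> thesis"
    then have "\<forall>k\<in>{0..p}. zc p x k al be \<le> 0" using that by force
    then have "(\<Sum>i\<in>{0..p}. zc p x i al be) \<le> 0" by (intro sum_nonpos) auto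
    then show False using gs by simp
  qed
  have jk: "j \<noteq> k" using zj zk by auto
  obtain e where e: "0 < e" and mx: "\<forall>y\<in>Kset p. pdist p y x < e \<longrightarrow> phi d p y \<le> phi d p x"
    using lm unfolding is_local_max_on_K_def by blast
  obtain y where "y \<in> Kset p" "pdist p y x < e" "phi d p x < phi d p y"
    using main_step[OF xK z0 z1 assms(3) _ _ jk al be zj zk e] j k by auto
  then show False using mx by force
qed

end
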